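(* Let $R$ be a ring, $a,b\in C(R)$ (the center of $R$) and $n\in\mathbb{N}$. Then $R$ is weakly $(ax^{2n}-bx)$-$r$-clean if and only if $R$ is weakly $(ax^{2n}+bx)$-$r$-clean.
   Context: Rings are associative with identity; $C(R)$ is the center of $R$ and $Reg(R)=\{r\in R: r=ryr \text{ for some } y\in R\}$. For a fixed polynomial $g(x)\in C(R)[x]$, an element $z\in R$ is weakly $g(x)$-$r$-clean if $z=r+s$ or $z=r-s$ with $r\in Reg(R)$ and $g(s)=0$; $R$ is weakly $g(x)$-$r$-clean if all its elements are. *)

theory Defs
  imports Main
begin

definition center :: "'a::ring_1 set" where
  "center = {c. \<forall>x. c * x = x * c}"

definition Reg :: "'a::ring_1 set" where
  "Reg = {r. \<exists>y. r = r * y * r}"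

text \<open>A polynomial over the center is represented by its evaluation map
  (coefficients central, so evaluation is unambiguous).\<close>

definition weakly_g_r_clean_elem :: "('a::ring_1 \<Rightarrow> 'a) \<Rightarrow> 'a \<Rightarrow> bool" where
  "weakly_g_r_clean_elem g z \<longleftrightarrow>
     (\<exists>r s. r \<in> Reg \<and> g s = 0 \<and> (z = r + s \<or> z = r - s))"

definition weakly_g_r_clean :: "('a::ring_1 \<Rightarrow> 'a) \<Rightarrow> bool" where
  "weakly_g_r_clean g \<longleftrightarrow> (\<forall>z. weakly_g_r_clean_elem g z)"

end

theory Submission
  imports Defs
begin

lemma swap_clean:
  fixes g h :: "'a::ring_1 \<Rightarrow> 'a"
  assumes "\<And>s. h (- s) = g s"
  shows "weakly_g_r_clean g \<Longrightarrow> weakly_g_r_clean h"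
  unfolding weakly_g_r_clean_def weakly_g_r_clean_elem_def
proof (intro allI)
  fix z
  assume H: "\<forall>z. \<exists>r s. r \<in> Reg \<and> g s = 0 \<and> (z = r + s \<or> z = r - s)"
  then obtain r s where rs: "r \<in> Reg" "g s = 0" "z = r + s \<or> z = r - s" by blast
  have "h (- s) = 0" using rs assms by simp
  moreover have "z = r + (- s) \<or> z = r - (- s)" using rs(3) by auto
  ultimately show "\<exists>r s. r \<in> Reg \<and> h s = 0 \<and> (z = r + s \<or> z = r - s)"
    using rs(1) by blast
qed

theorem theorem3p4:
  fixes a b :: "'a::ring_1" and n :: nat
  assumes "a \<in> center" and "b \<in> center" and "n \<ge> 1"
  shows "weakly_g_r_clean (\<lambda>x::'a. a * x ^ (2 * n) - b * x) \<longleftrightarrow>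
         weakly_g_r_clean (\<lambda>x::'a. a * x ^ (2 * n) + b * x)"
proof -
  have e: "(- s) ^ (2 * n) = s ^ (2 * n)" for s :: 'a
    by (simp add: power_mult)
  show ?thesis
  proof
    assume "weakly_g_r_clean (\<lambda>x::'a. a * x ^ (2 * n) - b * x)"
    then show "weakly_g_r_clean (\<lambda>x::'a. a * x ^ (2 * n) + b * x)"
      by (rule swap_clean[rotated]) (simp add: e)
  next
    assume "weakly_g_r_clean (\<lambda>x::'a. a * x ^ (2 * n) + b * x)"
    then show "weakly_g_r_clean (\<lambda>x::'a. a * x ^ (2 * n) - b * x)"
      by (rule swap_clean[rotated]) (simp add: e)
  qed
qed

end
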